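(* Let $q\le k$ and $\alpha\ge1$. Any outcome in the $\alpha$-$q$-core satisfies $(2\alpha+1)$-$q$-individual fairness if $N\subseteq C$ and $k\le n$, and is in the $\left(\gamma,\frac{\gamma(\alpha+1)}{\gamma-1}\right)$-$q$-transferable core restricted to $\ell<2q$, for every $\gamma>1$. Further, if $N\subseteq C$ and $k\le n$, any outcome satisfying $\beta$-$q$-individual fairness is in the $2\beta$-$q$-core.
   Context: Let $(\mathcal X,d)$ be a metric space, $N=[n]$ a set of agents and $C$ a set of candidates located in $\mathcal X$, $k\in\mathbb N^+$; an outcome is $W\subseteq C$ with $|W|\le k$; $B(i,r)=\{x\in\mathcal X:d(i,x)\le r\}$. For a set $W$ and $q\le|W|$, $d^q(i,W)$ denotes the distance from $i$ to its $q$-th closest point of $W$ (so $|\{c\in W: d(i,c)\le d^q(i,W)\}|\ge q$ counted with the $q$ closest). $\alpha$-$q$-core: $W$ is in it if there are no $\ell\in\mathbb N$, no $N'\subseteq N$ with $|N'|\ge\ell n/k$, and no $C'\subseteq C$ with $q\le|C'|\le\ell$ such that $\alpha\,d^q(i,C')<d^q(i,W)$ for all $i\in N'$. $\beta$-$q$-individual fairness (for instances with $N\subseteq C$ and $k\le n$): $d^q(i,W)\le\beta\,r^q(i)$ for all $i\in N$, where $r^q(i)=\min\{r\in\mathbb R:|B(i,r)\cap N|\ge qn/k\}$. $(\gamma,\alpha)$-$q$-transferable core restricted to $\ell<2q$: there are no $\ell\in\mathbb N$ with $\ell<2q$, no $N'\subseteq N$ with $|N'|\ge\gamma\ell n/k$,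 and no $C'\subseteq C$ with $q\le|C'|\le\ell$ such that $\alpha\sum_{i\in N'}d^q(i,C')<\sum_{i\in N'}d^q(i,W)$. *)

theory Defs
  imports "HOL-Analysis.Analysis" "HOL-Library.Multiset"
begin

text \<open>Agents and candidates are abstract entities of type 'e, located in a metric
space 'a via loc. N is the set of agents, C the set of candidates.\<close>

definition dloc :: "('e \<Rightarrow> 'a::metric_space) \<Rightarrow> 'e \<Rightarrow> 'e \<Rightarrow> real" where
  "dloc loc i c = dist (loc i) (loc c)"

text \<open>q-th closest distance from i to W (meaningful for 1 <= q <= card W, W finite).\<close>
definition dq :: "('e \<Rightarrow> 'a::metric_space) \<Rightarrow> nat \<Rightarrow> 'e \<Rightarrow> 'e set \<Rightarrow> real" where
  "dq loc q i W = sorted_list_of_multiset (image_mset (\<lambda>c. dloc loc i c) (mset_set W)) ! (q - 1)"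

definition outcome :: "'e set \<Rightarrow> nat \<Rightarrow> 'e set \<Rightarrow> bool" where
  "outcome C k W \<longleftrightarrow> W \<subseteq> C \<and> card W \<le> k"

definition in_core ::
  "('e \<Rightarrow> 'a::metric_space) \<Rightarrow> 'e set \<Rightarrow> 'e set \<Rightarrow> nat \<Rightarrow> nat \<Rightarrow> real \<Rightarrow> 'e set \<Rightarrow> bool" where
  "in_core loc N C k q \<alpha> W \<longleftrightarrow>
     \<not> (\<exists>(l::nat) N' C'. N' \<subseteq> N \<and> real (card N') \<ge> real l * real (card N) / real k \<and>
           C' \<subseteq> C \<and> q \<le> card C' \<and> card C' \<le> l \<and>
           (\<forall>i\<in>N'. \<alpha> * dq loc q i C' < dq loc q i W))"

definition rq :: "('e \<Rightarrow> 'a::metric_space) \<Rightarrow> 'e set \<Rightarrow> nat \<Rightarrow> nat \<Rightarrow> 'e \<Rightarrow> real" where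
  "rq loc N k q i = (LEAST r::real. real (card {j\<in>N. dloc loc i j \<le> r}) \<ge> real q * real (card N) / real k)"

definition individually_fair ::
  "('e \<Rightarrow> 'a::metric_space) \<Rightarrow> 'e set \<Rightarrow> nat \<Rightarrow> nat \<Rightarrow> real \<Rightarrow> 'e set \<Rightarrow> bool" where
  "individually_fair loc N k q \<beta> W \<longleftrightarrow> (\<forall>i\<in>N. dq loc q i W \<le> \<beta> * rq loc N k q i)"

definition in_transferable_core_restr ::
  "('e \<Rightarrow> 'a::metric_space) \<Rightarrow> 'e set \<Rightarrow> 'e set \<Rightarrow> nat \<Rightarrow> nat \<Rightarrow> real \<Rightarrow> real \<Rightarrow> 'e set \<Rightarrow> bool" where
  "in_transferable_core_restr loc N C k q \<gamma> \<alpha> W \<longleftrightarrow>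
     \<not> (\<exists>(l::nat) N' C'. l < 2 * q \<and> N' \<subseteq> N \<and>
           real (card N') \<ge> \<gamma> * real l * real (card N) / real k \<and>
           C' \<subseteq> C \<and> q \<le> card C' \<and> card C' \<le> l \<and>
           \<alpha> * (\<Sum>i\<in>N'. dq loc q i C') < (\<Sum>i\<in>N'. dq loc q i W))"

end

theory Submission
  imports Defs
begin

lemma count_sorted:
  assumes "finite W"
  shows "length (filter P (sorted_list_of_multiset (image_mset f (mset_set W)))) = card {c\<in>W. P (f c)}"
proof -
  let ?xs = "sorted_list_of_multiset (image_mset f (mset_set W))"
  have "length (filter P ?xs) = size (filter_mset P (image_mset f (mset_set W)))" by (metis mset_filter mset_sorted_list_of_multiset size_mset)
  also have "\<dots> = size (image_mset f (filter_mset (\<lambda>c. P (f c)) (mset_set W)))" by (simp add: filter_mset_image_mset)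
  also have "\<dots> = card {c\<in>W. P (f c)}" using assms by (simp add: filter_mset_mset_set)
  finally show ?thesis .
qed

lemma sorted_nth_count:
  fixes xs :: "real list"
  assumes "sorted xs" "1 \<le> q" "q \<le> length xs"
  shows "q \<le> length (filter (\<lambda>x. x \<le> xs ! (q-1)) xs)"
proof -
  have "{0..<q} \<subseteq> {i. i < length xs \<and> xs ! i \<le> xs ! (q-1)}"
    using assms by (auto intro: sorted_nth_mono)
  then have "card {0..<q} \<le> card {i. i < length xs \<and> xs ! i \<le> xs ! (q-1)}"
    by (intro card_mono) auto
  then show ?thesis by (simp add: length_filter_conv_card)
qed

lemma sorted_nth_le:
  fixes xs :: "real list"
  assumes "sorted xs" "1 \<le> q" "q \<le> length (filter (\<lambda>x. x \<le> y) xs)"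
  shows "xs ! (q-1) \<le> y"
proof (rule ccontr)
  assume "\<not> ?thesis"
  then have lt: "y < xs ! (q-1)" by simp
  have ql: "q \<le> length xs" using assms(3) length_filter_le order_trans by blast
  have "{i. i < length xs \<and> xs ! i \<le> y} \<subseteq> {0..<q-1}"
  proof
    fix i assume "i \<in> {i. i < length xs \<and> xs ! i \<le> y}"
    then have "i < length xs" "xs ! i \<le> y" by auto
    show "i \<in> {0..<q-1}"
    proof (rule ccontr)
      assume "i \<notin> {0..<q-1}"
      then have "q - 1 \<le> i" by simp
      then have "xs ! (q-1) \<le> xs ! i" using assms(1) \<open>i < length xs\<close> by (intro sorted_nth_mono)
      then show False using lt \<open>xs ! i \<le> y\<close> by simp
    qed
  qed
  then have "card {i. i < length xs \<and> xs ! i \<le> y} \<le> q - 1"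
    using card_mono[of "{0..<q-1}"] by fastforce
  then show False using assms(2,3) by (simp add: length_filter_conv_card)
qed

lemma dq_count:
  assumes "finite W" "1 \<le> q" "q \<le> card W"
  shows "q \<le> card {c\<in>W. dloc loc i c \<le> dq loc q i W}"
proof -
  let ?xs = "sorted_list_of_multiset (image_mset (\<lambda>c. dloc loc i c) (mset_set W))"
  have len: "length ?xs = card W"
  proof -
    have "length ?xs = size (mset ?xs)" by (rule size_mset[symmetric])
    also have "\<dots> = card W" by (simp only: mset_sorted_list_of_multiset size_image_mset size_mset_set)
    finally show ?thesis .
  qed
  have "q \<le> length (filter (\<lambda>x. x \<le> ?xs ! (q-1)) ?xs)"
    using assms len by (intro sorted_nth_count) auto
  moreover have "length (filter (\<lambda>x. x \<le> ?xs ! (q-1)) ?xs) = card {c\<in>W. dloc loc i c \<le> ?xs ! (q-1)}"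
    by (rule count_sorted[OF assms(1)])
  ultimately show ?thesis unfolding dq_def by simp
qed

lemma dq_le:
  assumes "finite W" "1 \<le> q" "q \<le> card {c\<in>W. dloc loc i c \<le> x}"
  shows "dq loc q i W \<le> x"
proof -
  let ?xs = "sorted_list_of_multiset (image_mset (\<lambda>c. dloc loc i c) (mset_set W))"
  have "length (filter (\<lambda>d. d \<le> x) ?xs) = card {c\<in>W. dloc loc i c \<le> x}"
    by (rule count_sorted[OF assms(1)])
  then have "q \<le> length (filter (\<lambda>d. d \<le> x) ?xs)" using assms(3) by simp
  then show ?thesis unfolding dq_def by (rule sorted_nth_le[OF sorted_sorted_list_of_multiset assms(2)])
qed

lemma dq_nonneg:
  assumes "finite W" "1 \<le> q" "q \<le> card W"
  shows "0 \<le> dq loc q i W"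
proof -
  let ?xs = "sorted_list_of_multiset (image_mset (\<lambda>c. dloc loc i c) (mset_set W))"
  have len: "length ?xs = card W"
  proof -
    have "length ?xs = size (mset ?xs)" by (rule size_mset[symmetric])
    also have "\<dots> = card W" by (simp only: mset_sorted_list_of_multiset size_image_mset size_mset_set)
    finally show ?thesis .
  qed
  have "?xs ! (q-1) \<in> set ?xs" using assms len by (intro nth_mem) auto
  moreover have "set ?xs = (\<lambda>c. dloc loc i c) ` W" using assms(1) by (simp add: set_sorted_list_of_multiset)
  ultimately have "?xs ! (q-1) \<in> (\<lambda>c. dloc loc i c) ` W" by simp
  then show ?thesis unfolding dq_def dloc_def by auto
qed

lemma dq_lip:
  assumes "finite W" "1 \<le> q" "q \<le> card W"
  shows "dq loc q j W \<le> dq loc q i W + dloc loc i j"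
proof (rule dq_le[OF assms(1,2)])
  have "{c\<in>W. dloc loc i c \<le> dq loc q i W} \<subseteq> {c\<in>W. dloc loc j c \<le> dq loc q i W + dloc loc i j}"
  proof safe
    fix c assume "c \<in> W" "dloc loc i c \<le> dq loc q i W"
    moreover have "dloc loc j c \<le> dloc loc i j + dloc loc i c"
      unfolding dloc_def by (rule dist_triangle3)
    ultimately show "dloc loc j c \<le> dq loc q i W + dloc loc i j" by simp
  qed
  then show "q \<le> card {c\<in>W. dloc loc j c \<le> dq loc q i W + dloc loc i j}"
    using dq_count[OF assms, of loc i] card_mono[OF _ \<open>_ \<subseteq> _\<close>] assms(1) by fastforce
qed


lemma rq_props:
  assumes "finite N" "N \<noteq> {}" "1 \<le> k" "1 \<le> q" "q \<le> k"
  shows "real q * real (card N) / real k \<le> real (card {j\<in>N. dloc loc i j \<le> rq loc N k q i})"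
    and "\<And>x. real q * real (card N) / real k \<le> real (card {j\<in>N. dloc loc i j \<le> x})
            \<Longrightarrow> rq loc N k q i \<le> x"
proof -
  define t where "t = real q * real (card N) / real k"
  define P where "P = (\<lambda>x. t \<le> real (card {j\<in>N. dloc loc i j \<le> x}))"
  define D where "D = (\<lambda>j. dloc loc i j) ` N"
  define S where "S = {d\<in>D. P d}"
  have fD: "finite D" "D \<noteq> {}" using assms unfolding D_def by auto
  have cN: "card N > 0" using assms card_gt_0_iff by blast
  have tpos: "t > 0" unfolding t_def using assms cN by auto
  have tle: "t \<le> real (card N)"
  proof -
    have "real q / real k \<le> 1" using assms by auto
    then have "real q / real k * real (card N) \<le> 1 * real (card N)"
      by (intro mult_right_mono) auto
    then show ?thesis unfolding t_def by simp
  qed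
  have "Max D \<in> S"
  proof -
    have "{j\<in>N. dloc loc i j \<le> Max D} = N" using fD unfolding D_def by auto
    then show ?thesis unfolding S_def P_def using tle Max_in[OF fD] by simp
  qed
  moreover have "finite S" using fD unfolding S_def by simp
  ultimately have fS: "finite S" "S \<noteq> {}" by blast+
  define r0 where "r0 = Min S"
  have Pr0: "P r0" using Min_in[OF fS] unfolding r0_def S_def by auto
  have minr0: "r0 \<le> y" if "P y" for y
  proof -
    have "card {j\<in>N. dloc loc i j \<le> y} > 0" using that tpos unfolding P_def by auto
    then obtain j0 where j0: "j0 \<in> N" "dloc loc i j0 \<le> y"
      by (metis (no_types, lifting) card.empty less_irrefl mem_Collect_eq equals0I)
    define E where "E = {d\<in>D. d \<le> y}"
    have fE: "finite E" "E \<noteq> {}" using fD j0 unfolding E_def D_def by auto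
    define y' where "y' = Max E"
    have y'y: "y' \<le> y" using Max_in[OF fE] unfolding y'_def E_def by auto
    have "{j\<in>N. dloc loc i j \<le> y} = {j\<in>N. dloc loc i j \<le> y'}"
    proof safe
      fix j assume "j \<in> N" "dloc loc i j \<le> y"
      then have "dloc loc i j \<in> E" unfolding E_def D_def by auto
      then show "dloc loc i j \<le> y'" unfolding y'_def using fE by simp
    next
      fix j assume "j \<in> N" "dloc loc i j \<le> y'"
      then show "dloc loc i j \<le> y" using y'y by simp
    qed
    then have "P y'" using that unfolding P_def by simp
    moreover have "y' \<in> D" using Max_in[OF fE] unfolding y'_def E_def by auto
    ultimately have "y' \<in> S" unfolding S_def by simp
    then have "r0 \<le> y'" unfolding r0_def using fS by simp
    then show ?thesis using y'y by simp
  qed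
  have eq: "rq loc N k q i = r0"
    unfolding rq_def using Pr0 minr0 unfolding P_def t_def by (intro Least_equality) auto
  show "real q * real (card N) / real k \<le> real (card {j\<in>N. dloc loc i j \<le> rq loc N k q i})"
    using Pr0 eq unfolding P_def t_def by simp
  show "rq loc N k q i \<le> x" if "real q * real (card N) / real k \<le> real (card {j\<in>N. dloc loc i j \<le> x})" for x
    using minr0[of x] that eq unfolding P_def t_def by simp
qed


lemma part1a:
  assumes "finite N" "N \<noteq> {}" "finite C"
    and "1 \<le> k" "1 \<le> q" "q \<le> k" "\<alpha> \<ge> 1"
    and W: "outcome C k W" "q \<le> card W" "in_core loc N C k q \<alpha> W"
    and NC: "N \<subseteq> C" "k \<le> card N"
  shows "individually_fair loc N k q (2 * \<alpha> + 1) W"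
  unfolding individually_fair_def
proof
  fix i assume iN: "i \<in> N"
  have fW: "finite W" using W(1) assms(3) unfolding outcome_def by (meson finite_subset)
  define r where "r = rq loc N k q i"
  define N' where "N' = {j\<in>N. dloc loc i j \<le> r}"
  have cN': "real q * real (card N) / real k \<le> real (card N')"
    using rq_props(1)[OF assms(1,2,4,5,6)] unfolding N'_def r_def by blast
  have "real q \<le> real q * real (card N) / real k"
    using assms NC by (simp add: field_simps)
  then have "q \<le> card N'" using cN' by linarith
  then obtain C' where C': "C' \<subseteq> N'" "card C' = q" by (meson obtain_subset_with_card_n)
  have fN': "finite N'" unfolding N'_def using assms(1) by simp
  have fC': "finite C'" using C' fN' finite_subset by blast
  show "dq loc q i W \<le> (2 * \<alpha> + 1) * rq loc N k q i"
  proof (rule ccontr)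
    assume "\<not> ?thesis"
    then have big: "dq loc q i W > (2 * \<alpha> + 1) * r" unfolding r_def by simp
    have "\<forall>j\<in>N'. \<alpha> * dq loc q j C' < dq loc q j W"
    proof
      fix j assume jN': "j \<in> N'"
      have "{c\<in>C'. dloc loc j c \<le> 2 * r} = C'"
      proof safe
        fix c assume "c \<in> C'"
        then have "dloc loc i c \<le> r" using C' unfolding N'_def by auto
        moreover have "dloc loc i j \<le> r" using jN' unfolding N'_def by auto
        moreover have "dloc loc j c \<le> dloc loc i j + dloc loc i c"
          unfolding dloc_def by (rule dist_triangle3)
        ultimately show "dloc loc j c \<le> 2 * r" by simp
      qed
      then have "dq loc q j C' \<le> 2 * r" using C' fC' assms(5) by (intro dq_le) auto
      then have "\<alpha> * dq loc q j C' \<le> \<alpha> * (2 * r)" using assms(7) by (intro mult_left_mono) auto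
      moreover have "dq loc q i W \<le> dq loc q j W + dloc loc j i"
        using dq_lip[OF fW assms(5) W(2)] by blast
      moreover have "dloc loc j i \<le> r" using jN' unfolding N'_def dloc_def by (simp add: dist_commute)
      ultimately show "\<alpha> * dq loc q j C' < dq loc q j W" using big by (simp add: algebra_simps)
    qed
    moreover have "C' \<subseteq> C" using C' NC unfolding N'_def by auto
    moreover have "N' \<subseteq> N" unfolding N'_def by auto
    ultimately have "\<exists>(l::nat) N'' C''. N'' \<subseteq> N \<and> real (card N'') \<ge> real l * real (card N) / real k \<and>
           C'' \<subseteq> C \<and> q \<le> card C'' \<and> card C'' \<le> l \<and>
           (\<forall>i\<in>N''. \<alpha> * dq loc q i C'' < dq loc q i W)"
      using cN' C' by (intro exI[of _ q] exI[of _ N'] exI[of _ C']) simp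
    with W(3) show False unfolding in_core_def by (rule notE)
  qed
qed


lemma card_filter_sum:
  assumes "finite A"
  shows "real (card {x\<in>A. P x}) = (\<Sum>x\<in>A. if P x then 1 else 0)"
proof -
  have "real (card {x\<in>A. P x}) = (\<Sum>x\<in>{x\<in>A. P x}. 1)" by simp
  also have "\<dots> = (\<Sum>x\<in>A. if P x then 1 else 0)" by (rule sum.inter_filter[OF assms])
  finally show ?thesis .
qed

lemma ex_max_fin:
  fixes f :: "'a \<Rightarrow> real"
  assumes "finite A" "A \<noteq> {}"
  shows "\<exists>x\<in>A. \<forall>y\<in>A. f y \<le> f x"
proof -
  have "Max (f ` A) \<in> f ` A" using assms by simp
  then obtain x where "x \<in> A" "f x = Max (f ` A)" by (metis imageE)
  moreover have "\<forall>y\<in>A. f y \<le> Max (f ` A)" using assms(1) by simp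
  ultimately show ?thesis by metis
qed

lemma part2:
  assumes "finite N" "N \<noteq> {}" "finite C"
    and "1 \<le> k" "1 \<le> q" "q \<le> k"
    and b: "\<beta> \<ge> 0" and IF: "individually_fair loc N k q \<beta> W"
  shows "in_core loc N C k q (2 * \<beta>) W"
  unfolding in_core_def
proof
  assume "\<exists>(l::nat) N' C'. N' \<subseteq> N \<and> real (card N') \<ge> real l * real (card N) / real k \<and>
           C' \<subseteq> C \<and> q \<le> card C' \<and> card C' \<le> l \<and>
           (\<forall>i\<in>N'. 2 * \<beta> * dq loc q i C' < dq loc q i W)"
  then obtain l N' C' where H: "N' \<subseteq> N" "real (card N') \<ge> real l * real (card N) / real k"
    "C' \<subseteq> C" "q \<le> card C'" "card C' \<le> l" "\<forall>i\<in>N'. 2 * \<beta> * dq loc q i C' < dq loc q i W"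
    by blast
  have fN': "finite N'" using H(1) assms(1) finite_subset by blast
  have fC': "finite C'" using H(3) assms(3) finite_subset by blast
  define T where "T = (\<lambda>j. {c\<in>C'. dloc loc j c \<le> dq loc q j C'})"
  define A where "A = (\<lambda>c. {j\<in>N'. c \<in> T j})"
  have Tq: "q \<le> card (T j)" for j unfolding T_def using dq_count[OF fC' assms(5) H(4)] by blast
  have "(\<Sum>c\<in>C'. real (card (A c))) = (\<Sum>c\<in>C'. \<Sum>j\<in>N'. if c \<in> T j then 1 else 0)"
    unfolding A_def using fN' by (simp add: card_filter_sum)
  also have "\<dots> = (\<Sum>j\<in>N'. \<Sum>c\<in>C'. if c \<in> T j then 1 else 0)" by (rule sum.swap)
  also have "\<dots> = (\<Sum>j\<in>N'. real (card (T j)))"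
  proof (rule sum.cong)
    fix j assume "j \<in> N'"
    have "{c\<in>C'. c \<in> T j} = T j" unfolding T_def by auto
    then show "(\<Sum>c\<in>C'. if c \<in> T j then 1 else 0) = real (card (T j))"
      using card_filter_sum[OF fC', of "\<lambda>c. c \<in> T j"] by simp
  qed simp
  also have "\<dots> \<ge> (\<Sum>j\<in>N'. real q)" using Tq by (intro sum_mono) auto
  finally have sumA: "(\<Sum>c\<in>C'. real (card (A c))) \<ge> real (card N') * real q" by simp
  define t where "t = real q * real (card N) / real k"
  have "\<exists>c\<in>C'. real (card (A c)) \<ge> t"
  proof (rule ccontr)
    assume "\<not> ?thesis"
    then have lt: "\<forall>c\<in>C'. real (card (A c)) < t" by auto
    have ne: "C' \<noteq> {}" using H(4) assms(5) by auto
    have "(\<Sum>c\<in>C'. real (card (A c))) < (\<Sum>c\<in>C'. t)"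
      using lt fC' ne by (intro sum_strict_mono) auto
    also have "\<dots> = real (card C') * t" by simp
    also have "\<dots> \<le> real l * t" using H(5) unfolding t_def by (intro mult_right_mono) auto
    also have "\<dots> = real l * real (card N) / real k * real q" unfolding t_def by simp
    also have "\<dots> \<le> real (card N') * real q" using H(2) by (intro mult_right_mono) auto
    finally show False using sumA by simp
  qed
  then obtain c where c: "c \<in> C'" "real (card (A c)) \<ge> t" by blast
  have "card N > 0" using assms(1,2) by (simp add: card_gt_0_iff)
  then have tpos: "t > 0" unfolding t_def using assms(4,5) by simp
  then have Ane: "A c \<noteq> {}" using c by auto
  have fA: "finite (A c)" unfolding A_def using fN' by simp
  obtain i where i: "i \<in> A c" "\<forall>j\<in>A c. dloc loc j c \<le> dloc loc i c"
    using ex_max_fin[OF fA Ane, of "\<lambda>j. dloc loc j c"] by blast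
  have iN': "i \<in> N'" and ic: "dloc loc i c \<le> dq loc q i C'" using i(1) unfolding A_def T_def by auto
  have "A c \<subseteq> {j\<in>N. dloc loc i j \<le> 2 * dq loc q i C'}"
  proof
    fix j assume j: "j \<in> A c"
    then have "j \<in> N" using H(1) unfolding A_def by auto
    moreover have "dloc loc i j \<le> dloc loc i c + dloc loc j c"
      unfolding dloc_def by (rule dist_triangle2)
    moreover have "dloc loc j c \<le> dloc loc i c" using i(2) j by blast
    ultimately show "j \<in> {j\<in>N. dloc loc i j \<le> 2 * dq loc q i C'}" using ic by simp
  qed
  then have "card (A c) \<le> card {j\<in>N. dloc loc i j \<le> 2 * dq loc q i C'}"
    using assms(1) by (intro card_mono) auto
  then have "rq loc N k q i \<le> 2 * dq loc q i C'"
    using c(2) unfolding t_def by (intro rq_props(2)[OF assms(1,2,4,5,6)]) linarith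
  then have "\<beta> * rq loc N k q i \<le> \<beta> * (2 * dq loc q i C')" using b by (rule mult_left_mono)
  then have "\<beta> * rq loc N k q i \<le> 2 * \<beta> * dq loc q i C'" by (simp add: algebra_simps)
  moreover have "dq loc q i W \<le> \<beta> * rq loc N k q i" using IF iN' H(1) unfolding individually_fair_def by blast
  moreover have "2 * \<beta> * dq loc q i C' < dq loc q i W" using H(6) iN' by blast
  ultimately show False by linarith
qed


lemma part1b:
  assumes "finite N" "N \<noteq> {}" "finite C"
    and "1 \<le> k" "1 \<le> q" "q \<le> k" "\<alpha> \<ge> 1"
    and W: "outcome C k W" "q \<le> card W" "in_core loc N C k q \<alpha> W"
    and g: "\<gamma> > 1"
  shows "in_transferable_core_restr loc N C k q \<gamma> (\<gamma> * (\<alpha> + 1) / (\<gamma> - 1)) W"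
  unfolding in_transferable_core_restr_def
proof
  define a' where "a' = \<gamma> * (\<alpha> + 1) / (\<gamma> - 1)"
  assume "\<exists>(l::nat) N' C'. l < 2 * q \<and> N' \<subseteq> N \<and>
           real (card N') \<ge> \<gamma> * real l * real (card N) / real k \<and>
           C' \<subseteq> C \<and> q \<le> card C' \<and> card C' \<le> l \<and>
           \<gamma> * (\<alpha> + 1) / (\<gamma> - 1) * (\<Sum>i\<in>N'. dq loc q i C') < (\<Sum>i\<in>N'. dq loc q i W)"
  then obtain l N' C' where H: "l < 2 * q" "N' \<subseteq> N" "real (card N') \<ge> \<gamma> * real l * real (card N) / real k"
    "C' \<subseteq> C" "q \<le> card C'" "card C' \<le> l"
    "a' * (\<Sum>i\<in>N'. dq loc q i C') < (\<Sum>i\<in>N'. dq loc q i W)"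
    unfolding a'_def by blast
  have fW: "finite W" using W(1) assms(3) unfolding outcome_def by (meson finite_subset)
  have fN': "finite N'" using H(2) assms(1) finite_subset by blast
  have fC': "finite C'" using H(4) assms(3) finite_subset by blast
  define S where "S = {i\<in>N'. \<alpha> * dq loc q i C' < dq loc q i W}"
  define G where "G = N' - S"
  have fS: "finite S" and fG: "finite G" unfolding S_def G_def using fN' by auto
  have SN: "S \<subseteq> N'" unfolding S_def by auto
  have "\<not> (real (card S) \<ge> real l * real (card N) / real k)"
    using W(3) H SN unfolding in_core_def S_def by blast
  then have Slt: "real (card S) < real l * real (card N) / real k" by simp
  have "\<gamma> * (real l * real (card N) / real k) \<le> real (card N')" using H(3) by simp
  moreover have "\<gamma> * real (card S) \<le> \<gamma> * (real l * real (card N) / real k)"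
    using Slt g by (intro mult_left_mono) auto
  ultimately have "\<gamma> * real (card S) \<le> real (card N')" by linarith
  moreover have cN': "card N' = card S + card G"
  proof -
    have "card G = card N' - card S" unfolding G_def by (rule card_Diff_subset[OF fS SN])
    moreover have "card S \<le> card N'" using SN fN' by (rule card_mono[rotated])
    ultimately show ?thesis by simp
  qed
  ultimately have SG: "(\<gamma> - 1) * real (card S) \<le> real (card G)" by (simp add: algebra_simps)
  have "G \<noteq> {}"
  proof
    assume "G = {}"
    then have "\<gamma> * real (card S) \<le> real (card S)" using \<open>\<gamma> * real (card S) \<le> real (card N')\<close> cN' by simp
    then have "(\<gamma> - 1) * real (card S) \<le> 0" by (simp add: algebra_simps)
    then have S0: "card S = 0" using g by (simp add: mult_le_0_iff)
    have p1: "real l > 0" using H(5,6) assms(5) by simp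
    have "card N > 0" using assms(1,2) by (simp add: card_gt_0_iff)
    then have p2: "real (card N) > 0" by simp
    have p3: "real k > 0" using assms(4) by simp
    have "\<gamma> * real l * real (card N) / real k > 0" using g p1 p2 p3 by (intro divide_pos_pos mult_pos_pos) auto
    then have "real (card N') > 0" using H(3) by linarith
    then show False using S0 cN' \<open>G = {}\<close> by simp
  qed
  define m where "m = Min ((\<lambda>j. dq loc q j C') ` G)"
  have "m \<in> (\<lambda>j. dq loc q j C') ` G"
    unfolding m_def using fG \<open>G \<noteq> {}\<close> by (intro Min_in) auto
  then obtain j0 where j0: "j0 \<in> G" "dq loc q j0 C' = m" by (metis imageE)
  have mle: "m \<le> dq loc q j C'" if "j \<in> G" for j unfolding m_def using fG that by simp
  have m0: "0 \<le> m" using j0(2) dq_nonneg[OF fC' assms(5) H(5), of loc j0] by simp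
  have j0W: "dq loc q j0 W \<le> \<alpha> * m" using j0 unfolding G_def S_def by auto
  have Sbound: "dq loc q i W \<le> dq loc q i C' + (\<alpha> + 1) * m" if "i \<in> S" for i
  proof -
    define Ti where "Ti = {c\<in>C'. dloc loc i c \<le> dq loc q i C'}"
    define Tj where "Tj = {c\<in>C'. dloc loc j0 c \<le> dq loc q j0 C'}"
    have "q \<le> card Ti" "q \<le> card Tj" unfolding Ti_def Tj_def using dq_count[OF fC' assms(5) H(5)] by blast+
    have "Ti \<inter> Tj \<noteq> {}"
    proof
      assume "Ti \<inter> Tj = {}"
      then have "card (Ti \<union> Tj) = card Ti + card Tj" using fC' unfolding Ti_def Tj_def
        by (intro card_Un_disjoint) auto
      moreover have "card (Ti \<union> Tj) \<le> card C'" using fC' unfolding Ti_def Tj_def by (intro card_mono) auto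
      ultimately show False using \<open>q \<le> card Ti\<close> \<open>q \<le> card Tj\<close> H(1,6) by linarith
    qed
    then obtain c where "c \<in> Ti" "c \<in> Tj" by blast
    then have "dloc loc i c \<le> dq loc q i C'" "dloc loc j0 c \<le> m" using j0 unfolding Ti_def Tj_def by auto
    moreover have "dloc loc j0 i \<le> dloc loc i c + dloc loc j0 c"
      unfolding dloc_def using dist_triangle2[of "loc j0" "loc i" "loc c"] by linarith
    moreover have "dq loc q i W \<le> dq loc q j0 W + dloc loc j0 i" using dq_lip[OF fW assms(5) W(2)] by blast
    moreover have "\<alpha> * m + (dq loc q i C' + m) = dq loc q i C' + (\<alpha> + 1) * m" by (simp add: algebra_simps)
    ultimately show ?thesis using j0W by linarith
  qed
  have Gbound: "dq loc q j W \<le> \<alpha> * dq loc q j C'" if "j \<in> G" for j using that unfolding G_def S_def by auto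
  have N'eq: "N' = S \<union> G" and disj: "S \<inter> G = {}" unfolding G_def using SN by auto
  have "(\<Sum>i\<in>N'. dq loc q i W) = (\<Sum>i\<in>S. dq loc q i W) + (\<Sum>i\<in>G. dq loc q i W)"
    unfolding N'eq using fS fG disj by (simp add: sum.union_disjoint)
  also have "\<dots> \<le> (\<Sum>i\<in>S. dq loc q i C' + (\<alpha> + 1) * m) + (\<Sum>i\<in>G. \<alpha> * dq loc q i C')"
    using Sbound Gbound by (intro add_mono sum_mono) auto
  also have "\<dots> = (\<Sum>i\<in>S. dq loc q i C') + real (card S) * (\<alpha> + 1) * m + \<alpha> * (\<Sum>i\<in>G. dq loc q i C')"
    by (simp add: sum.distrib sum_distrib_left)
  finally have lhs: "(\<Sum>i\<in>N'. dq loc q i W) \<le> (\<Sum>i\<in>S. dq loc q i C') + real (card S) * (\<alpha> + 1) * m + \<alpha> * (\<Sum>i\<in>G. dq loc q i C')" .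
  have rhs: "a' * (\<Sum>i\<in>N'. dq loc q i C') = a' * (\<Sum>i\<in>S. dq loc q i C') + a' * (\<Sum>i\<in>G. dq loc q i C')"
    unfolding N'eq using fS fG disj by (simp add: sum.union_disjoint algebra_simps)
  have SC0: "0 \<le> (\<Sum>i\<in>S. dq loc q i C')" using dq_nonneg[OF fC' assms(5) H(5)] by (intro sum_nonneg) blast
  have a'1: "a' \<ge> 1" unfolding a'_def using g assms(7) by (simp add: field_simps)
  have a'a: "(a' - \<alpha>) * (\<gamma> - 1) = \<gamma> + \<alpha>" unfolding a'_def using g by (simp add: field_simps)
  have GC: "real (card G) * m \<le> (\<Sum>i\<in>G. dq loc q i C')"
    using mle sum_mono[of G "\<lambda>_. m" "\<lambda>i. dq loc q i C'"] by simp
  have "a' - \<alpha> = (\<gamma> + \<alpha>) / (\<gamma> - 1)" unfolding a'_def using g by (simp add: field_simps)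
  then have am0: "a' - \<alpha> \<ge> 0" using g assms(7) by simp
  have "real (card S) * (\<alpha> + 1) \<le> real (card S) * (\<gamma> + \<alpha>)" using g by (intro mult_left_mono) auto
  also have "\<dots> = (a' - \<alpha>) * ((\<gamma> - 1) * real (card S))"
  proof -
    have "(a' - \<alpha>) * ((\<gamma> - 1) * real (card S)) = ((a' - \<alpha>) * (\<gamma> - 1)) * real (card S)"
      by (simp only: mult.assoc)
    also have "\<dots> = (\<gamma> + \<alpha>) * real (card S)" using a'a by simp
    finally show ?thesis by (simp only: mult.commute)
  qed
  also have "\<dots> \<le> (a' - \<alpha>) * real (card G)" using SG am0 by (intro mult_left_mono) auto
  finally have "real (card S) * (\<alpha> + 1) * m \<le> (a' - \<alpha>) * real (card G) * m" using m0 by (intro mult_right_mono) auto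
  also have "\<dots> \<le> (a' - \<alpha>) * (\<Sum>i\<in>G. dq loc q i C')" using mult_left_mono[OF GC am0]
    by (simp add: mult.assoc)
  finally have key: "real (card S) * (\<alpha> + 1) * m \<le> (a' - \<alpha>) * (\<Sum>i\<in>G. dq loc q i C')" .
  have "(\<Sum>i\<in>S. dq loc q i C') \<le> a' * (\<Sum>i\<in>S. dq loc q i C')" using mult_right_mono[OF a'1 SC0] by simp
  moreover have "(a' - \<alpha>) * (\<Sum>i\<in>G. dq loc q i C') = a' * (\<Sum>i\<in>G. dq loc q i C') - \<alpha> * (\<Sum>i\<in>G. dq loc q i C')"
    by (simp add: algebra_simps)
  ultimately have "(\<Sum>i\<in>N'. dq loc q i W) \<le> a' * (\<Sum>i\<in>N'. dq loc q i C')"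
    using lhs rhs key by linarith
  then show False using H(7) by simp
qed


theorem theorem8:
  fixes loc :: "'e \<Rightarrow> 'a::metric_space"
    and N C :: "'e set" and k q :: nat and \<alpha> :: real
  assumes "finite N" and "N \<noteq> {}" and "finite C"
    and "1 \<le> k" and "1 \<le> q" and "q \<le> k" and "\<alpha> \<ge> 1"
  shows "(\<forall>W. outcome C k W \<and> q \<le> card W \<and> in_core loc N C k q \<alpha> W \<longrightarrow>
            ((N \<subseteq> C \<and> k \<le> card N) \<longrightarrow> individually_fair loc N k q (2 * \<alpha> + 1) W) \<and>
            (\<forall>\<gamma>::real. \<gamma> > 1 \<longrightarrow>
               in_transferable_core_restr loc N C k q \<gamma> (\<gamma> * (\<alpha> + 1) / (\<gamma> - 1)) W))
       \<and> ((N \<subseteq> C \<and> k \<le> card N) \<longrightarrow>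
            (\<forall>(\<beta>::real) W. \<beta> \<ge> 0 \<and> outcome C k W \<and> q \<le> card W \<and>
                individually_fair loc N k q \<beta> W \<longrightarrow> in_core loc N C k q (2 * \<beta>) W))"
proof (intro conjI allI impI)
  fix W assume h: "outcome C k W \<and> q \<le> card W \<and> in_core loc N C k q \<alpha> W"
  {
    assume "N \<subseteq> C \<and> k \<le> card N"
    then show "individually_fair loc N k q (2 * \<alpha> + 1) W"
      using part1a[OF assms] h by blast
  }
  {
    fix \<gamma> :: real assume "\<gamma> > 1"
    then show "in_transferable_core_restr loc N C k q \<gamma> (\<gamma> * (\<alpha> + 1) / (\<gamma> - 1)) W"
      using part1b[OF assms] h by blast
  }
next
  fix \<beta> :: real and W
  assume "\<beta> \<ge> 0 \<and> outcome C k W \<and> q \<le> card W \<and> individually_fair loc N k q \<beta> W"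
  then show "in_core loc N C k q (2 * \<beta>) W"
    using part2[OF assms(1-6)] by blast
qed

end
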